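(* Let $\{X_\alpha\}$ be an arbitrary family (indexed by an arbitrary set) of positive real-valued random variables, with distribution functions $F_\alpha(t)=\mathbb{P}(X_\alpha\le t)$. The following are equivalent: (i) there exists an integrable random variable $Y$ such that $X_\alpha \le_{\mathrm{icx}} Y$ for all $\alpha$; (ii) $\{X_\alpha\}$ is uniformly integrable, i.e. $\sup_\alpha \mathbb{E}\, X_\alpha 1(X_\alpha>t)\to 0$ as $t\to\infty$; (iii) $\lim_{t\to\infty}\sup_\alpha \int_t^\infty (1-F_\alpha(u))\,du = 0$.
   Context: "Positive" means nonnegative. The random variables need not be defined on a common probability space; each $X_\alpha$ lives on its own probability space and $\mathbb{E}$ denotes expectation there. For positive random variables $X_1,X_2$, $X_1\le_{\mathrm{icx}} X_2$ (increasing convex order) means $\mathbb{E}\phi(X_1)\le\mathbb{E}\phi(X_2)$ for all increasing (nondecreasing) convex functions $\phi:\mathbb{R}_+\to\mathbb{R}_+$; equivalently, $\mathbb{E}(X_1-t)_+\le \mathbb{E}(X_2-t)_+$ for all $t\ge 0$, where $x_+=\max(x,0)$. *)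

theory Defs
  imports "HOL-Probability.Probability"
begin

definition pos_rv :: "'a measure \<Rightarrow> ('a \<Rightarrow> real) \<Rightarrow> bool" where
  "pos_rv M X \<longleftrightarrow> prob_space M \<and> X \<in> borel_measurable M \<and> (\<forall>x\<in>space M. 0 \<le> X x)"

definition icx_le :: "'a measure \<Rightarrow> ('a \<Rightarrow> real) \<Rightarrow> 'b measure \<Rightarrow> ('b \<Rightarrow> real) \<Rightarrow> bool" where
  "icx_le M1 X1 M2 X2 \<longleftrightarrow>
     (\<forall>\<phi> :: real \<Rightarrow> real. mono_on {0..} \<phi> \<and> convex_on {0..} \<phi> \<and> (\<forall>x\<ge>0. 0 \<le> \<phi> x) \<longrightarrow>
        (\<integral>\<^sup>+ x. ennreal (\<phi> (X1 x)) \<partial>M1) \<le> (\<integral>\<^sup>+ y. ennreal (\<phi> (X2 y)) \<partial>M2))"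

definition distr_fun :: "'a measure \<Rightarrow> ('a \<Rightarrow> real) \<Rightarrow> real \<Rightarrow> real" where
  "distr_fun M X t = measure M {x \<in> space M. X x \<le> t}"

end

theory Submission
  imports Defs
begin


lemma layer_cake_tail:
  assumes P: "pos_rv M X" and t: "0 \<le> t"
  shows "(\<integral>\<^sup>+ u. ennreal (indicator {t..} u * (1 - distr_fun M X u)) \<partial>lborel)
       = (\<integral>\<^sup>+ x. ennreal (max 0 (X x - t)) \<partial>M)"
proof -
  interpret prob_space M using P by (simp add: pos_rv_def)
  have Xm[measurable]: "X \<in> borel_measurable M" using P by (simp add: pos_rv_def)
  interpret pair_sigma_finite lborel M
    by (simp add: pair_sigma_finite.intro lborel.sigma_finite_measure_axioms sigma_finite_measure_axioms)
  define h where "h = (\<lambda>(u::real,x). (if t \<le> u \<and> u < X x then 1 else 0 :: ennreal))"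
  have hm: "h \<in> borel_measurable (lborel \<Otimes>\<^sub>M M)"
    unfolding h_def by measurable
  have 1: "ennreal (indicator {t..} u * (1 - distr_fun M X u)) = (\<integral>\<^sup>+ x. h (u,x) \<partial>M)" for u
  proof (cases "t \<le> u")
    case True
    have s: "{x \<in> space M. X x \<le> u} \<in> events" by measurable
    have "1 - distr_fun M X u = prob (space M - {x \<in> space M. X x \<le> u})"
      unfolding distr_fun_def using prob_compl[OF s] by simp
    also have "space M - {x \<in> space M. X x \<le> u} = {x \<in> space M. u < X x}" by auto
    finally have e: "ennreal (1 - distr_fun M X u) = emeasure M {x \<in> space M. u < X x}"
      by (simp add: emeasure_eq_measure)
    have "(\<integral>\<^sup>+ x. h (u,x) \<partial>M) = (\<integral>\<^sup>+ x. indicator {x \<in> space M. u < X x} x \<partial>M)"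
      by (rule nn_integral_cong) (auto simp: h_def True indicator_def)
    also have "\<dots> = emeasure M {x \<in> space M. u < X x}"
      by (rule nn_integral_indicator) measurable
    finally show ?thesis using True e by simp
  next
    case False
    then show ?thesis by (simp add: h_def)
  qed
  have 2: "(\<integral>\<^sup>+ u. h (u,x) \<partial>lborel) = ennreal (max 0 (X x - t))" for x
  proof (cases "t \<le> X x")
    case True
    have "(\<integral>\<^sup>+ u. h (u,x) \<partial>lborel) = (\<integral>\<^sup>+ u. indicator {t..<X x} u \<partial>lborel)"
      by (rule nn_integral_cong) (auto simp: h_def indicator_def)
    also have "\<dots> = ennreal (X x - t)" using True by simp
    finally show ?thesis using True by simp
  next
    case False
    have "\<And>u. h (u,x) = 0" using False by (auto simp: h_def)
    then show ?thesis using False by simp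
  qed
  have "(\<integral>\<^sup>+ u. ennreal (indicator {t..} u * (1 - distr_fun M X u)) \<partial>lborel)
      = (\<integral>\<^sup>+ u. (\<integral>\<^sup>+ x. h (u,x) \<partial>M) \<partial>lborel)" by (simp add: 1)
  also have "\<dots> = (\<integral>\<^sup>+ x. (\<integral>\<^sup>+ u. h (u,x) \<partial>lborel) \<partial>M)"
    using Fubini[OF hm] by simp
  also have "\<dots> = (\<integral>\<^sup>+ x. ennreal (max 0 (X x - t)) \<partial>M)" by (simp add: 2)
  finally show ?thesis .
qed



context
  fixes \<phi> :: "real \<Rightarrow> real" and h :: real and N :: nat
  assumes mono: "mono_on {0..} \<phi>" and cvx: "convex_on {0..} \<phi>" and h: "0 < h" and N: "1 \<le> N"
begin

definition "pp k = \<phi> (real k * h)"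
definition "dd k = (pp (Suc k) - pp k) / h"
definition "cc k = (case k of 0 \<Rightarrow> dd 0 | Suc j \<Rightarrow> dd (Suc j) - dd j)"
definition "psi x = \<phi> 0 + (\<Sum>k<N. cc k * max 0 (x - real (Suc k) * h))"

lemma dd_nonneg: "0 \<le> dd k"
proof -
  have "\<phi> (real k * h) \<le> \<phi> (real (Suc k) * h)"
    using h by (intro mono_onD[OF mono]) (auto simp: field_simps)
  then show ?thesis using h by (simp add: dd_def pp_def)
qed

lemma dd_mono: "dd j \<le> dd (Suc j)"
proof -
  let ?a = "real j * h" and ?b = "real (Suc (Suc j)) * h" and ?c = "real (Suc j) * h"
  have c1: "convex_on {?a..?b} \<phi>"
    by (rule convex_on_subset[OF cvx]) (use h in auto)
  have "?c \<in> {?a..?b}" using h by (auto simp: field_simps)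
  from convex_onD_Icc'[OF c1 this]
  have "\<phi> ?c \<le> (\<phi> ?b - \<phi> ?a) / (?b - ?a) * (?c - ?a) + \<phi> ?a" by simp
  also have "(?b - ?a) = 2 * h" by (simp add: field_simps)
  also have "?c - ?a = h" by (simp add: field_simps)
  finally have "\<phi> ?c \<le> (\<phi> ?b - \<phi> ?a) / 2 + \<phi> ?a" using h by simp
  moreover have "pp j = \<phi> ?a" "pp (Suc j) = \<phi> ?c" "pp (Suc (Suc j)) = \<phi> ?b" by (simp_all add: pp_def)
  ultimately have "pp (Suc j) - pp j \<le> pp (Suc (Suc j)) - pp (Suc j)"
    by (simp add: field_simps)
  then show ?thesis unfolding dd_def using h by (intro divide_right_mono) auto
qed

lemma cc_nonneg: "0 \<le> cc k"
  using dd_nonneg dd_mono by (cases k) (auto simp: cc_def)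

lemma psi_ge: "\<phi> 0 \<le> psi x"
  unfolding psi_def using cc_nonneg by (auto intro!: sum_nonneg)

lemma ident: "(\<Sum>k<Suc j. cc k * (x - real (Suc k) * h)) = dd j * (x - real (Suc j) * h) + pp j - pp 0"
proof (induction j)
  case 0
  then show ?case by (simp add: cc_def)
next
  case (Suc j)
  have e: "dd j * h = pp (Suc j) - pp j" using h by (simp add: dd_def)
  have "(\<Sum>k<Suc (Suc j). cc k * (x - real (Suc k) * h))
     = dd j * (x - real (Suc j) * h) + pp j - pp 0 + (dd (Suc j) - dd j) * (x - real (Suc (Suc j)) * h)"
    using Suc by (simp add: cc_def)
  also have "\<dots> = dd (Suc j) * (x - real (Suc (Suc j)) * h) + pp j - pp 0 + dd j * h"
    by (simp add: algebra_simps)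
  finally show ?case using e by simp
qed

lemma psi_eval:
  assumes j: "j < N" and x1: "real (Suc j) * h \<le> x" and x2: "x \<le> real (Suc (Suc j)) * h \<or> Suc j = N"
  shows "psi x = pp j + dd j * (x - real (Suc j) * h)"
proof -
  have "(\<Sum>k<N. cc k * max 0 (x - real (Suc k) * h)) = (\<Sum>k<Suc j. cc k * (x - real (Suc k) * h))"
  proof (rule sum.mono_neutral_cong_right)
    show "{..<Suc j} \<subseteq> {..<N}" using j by auto
    show "\<forall>i\<in>{..<N} - {..<Suc j}. cc i * max 0 (x - real (Suc i) * h) = 0"
    proof
      fix i assume i: "i \<in> {..<N} - {..<Suc j}"
      then have "Suc j \<le> i" "i < N" by auto
      then have "x \<le> real (Suc i) * h" using x2 h
        by (auto intro: order.trans[OF _ mult_right_mono])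
      then show "cc i * max 0 (x - real (Suc i) * h) = 0" by simp
    qed
    show "\<And>k. k \<in> {..<Suc j} \<Longrightarrow> cc k * max 0 (x - real (Suc k) * h) = cc k * (x - real (Suc k) * h)"
    proof -
      fix k assume "k \<in> {..<Suc j}"
      then have "real (Suc k) * h \<le> real (Suc j) * h" using h by (intro mult_right_mono) auto
      then show "cc k * max 0 (x - real (Suc k) * h) = cc k * (x - real (Suc k) * h)" using x1 by simp
    qed
  qed simp
  then show ?thesis unfolding psi_def ident by (simp add: pp_def)
qed

lemma locate:
  assumes "h \<le> x"
  shows "\<exists>j<N. real (Suc j) * h \<le> x \<and> (x \<le> real (Suc (Suc j)) * h \<or> (Suc j = N \<and> real (Suc (Suc j)) * h < x))"
proof -
  define J where "J = nat \<lfloor>x / h\<rfloor>"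
  have xh: "1 \<le> x / h" using assms h by simp
  then have f1: "1 \<le> \<lfloor>x / h\<rfloor>" by linarith
  have rJ: "real J = of_int \<lfloor>x / h\<rfloor>" using f1 by (simp add: J_def)
  have "real J \<le> x / h" "x / h < real J + 1" using rJ by linarith+
  then have a: "real J * h \<le> x" and b: "x < real (Suc J) * h" using h by (auto simp: field_simps)
  have J1: "1 \<le> J" using f1 J_def by linarith
  show ?thesis
  proof (cases "J \<le> N")
    case True
    show ?thesis
      by (rule exI[of _ "J - 1"]) (use True J1 a b in \<open>auto simp: of_nat_diff\<close>)
  next
    case False
    have "real N * h \<le> real J * h" using False h by (intro mult_right_mono) auto
    then show ?thesis using N a False
      by (intro exI[of _ "N - 1"]) (auto simp: of_nat_diff)
  qed
qed

lemma psi_le: assumes "0 \<le> x" shows "psi x \<le> \<phi> x"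
proof (cases "x < h")
  case True
  have "psi x = \<phi> 0" unfolding psi_def
  proof -
    have "\<And>k. x - real (Suc k) * h \<le> 0" using True h
      by (smt (verit, best) mult_le_cancel_right1 of_nat_0_le_iff of_nat_Suc)
    then show "\<phi> 0 + (\<Sum>k<N. cc k * max 0 (x - real (Suc k) * h)) = \<phi> 0" by simp
  qed
  then show ?thesis using mono_onD[OF mono, of 0 x] assms by simp
next
  case False
  then have "h \<le> x" by simp
  then obtain j where j: "j < N" "real (Suc j) * h \<le> x"
    and x2: "x \<le> real (Suc (Suc j)) * h \<or> (Suc j = N \<and> real (Suc (Suc j)) * h < x)"
    using locate by blast
  have ev: "psi x = pp j + dd j * (x - real (Suc j) * h)"
    using x2 by (intro psi_eval[OF j]) auto
  from x2 show ?thesis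
  proof
    assume x2: "x \<le> real (Suc (Suc j)) * h"
    have "dd j * (x - real (Suc j) * h) \<le> dd j * h"
      using x2 dd_nonneg by (intro mult_left_mono) (auto simp: algebra_simps)
    also have "\<dots> = pp (Suc j) - pp j" using h by (simp add: dd_def)
    finally have "psi x \<le> pp (Suc j)" using ev by simp
    also have "pp (Suc j) \<le> \<phi> x" unfolding pp_def using j h assms
      by (intro mono_onD[OF mono]) auto
    finally show ?thesis .
  next
    assume x2: "Suc j = N \<and> real (Suc (Suc j)) * h < x"
    let ?a = "real j * h" and ?c = "real (Suc j) * h"
    have ac: "?a < ?c" using h by simp
    have cx: "?c < x" using x2 h
      by (smt (verit) mult_right_mono of_nat_0_le_iff of_nat_Suc)
    have a0: "0 \<le> ?a" using h by simp
    have c1: "convex_on {?a..x} \<phi>"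
      by (rule convex_on_subset[OF cvx]) (use a0 in auto)
    have "?c \<in> {?a..x}" using ac cx by auto
    from convex_onD_Icc'[OF c1 this]
    have "\<phi> ?c \<le> (\<phi> x - \<phi> ?a) / (x - ?a) * h + \<phi> ?a" by (simp add: algebra_simps)
    then have "dd j \<le> (\<phi> x - \<phi> ?a) / (x - ?a)" using h
      by (simp add: dd_def pp_def field_simps)
    then have "dd j * (x - ?a) \<le> \<phi> x - \<phi> ?a" using ac cx
      by (simp add: pos_le_divide_eq)
    moreover have "dd j * (x - ?c) \<le> dd j * (x - ?a)"
      using dd_nonneg[of j] ac by (intro mult_left_mono) auto
    ultimately show ?thesis using ev by (simp add: pp_def)
  qed
qed

lemma psi_lower: assumes "2 * h \<le> x" "x \<le> real N * h" shows "\<phi> (x - 2 * h) \<le> psi x"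
proof -
  have "h \<le> x" using assms h by simp
  then obtain j where j: "j < N" "real (Suc j) * h \<le> x"
    and x2: "x \<le> real (Suc (Suc j)) * h \<or> (Suc j = N \<and> real (Suc (Suc j)) * h < x)"
    using locate by blast
  have x3: "x \<le> real (Suc (Suc j)) * h"
    using x2 assms(2) h by (auto simp: field_simps)
  have ev: "psi x = pp j + dd j * (x - real (Suc j) * h)"
    using x3 by (intro psi_eval[OF j]) auto
  have "\<phi> (x - 2 * h) \<le> pp j" unfolding pp_def
    using x3 assms(1) by (intro mono_onD[OF mono]) (auto simp: field_simps)
  also have "\<dots> \<le> psi x" using ev dd_nonneg[of j] j(2) by simp
  finally show ?thesis .
qed

end


lemma lin_int:
  assumes "prob_space M" and [measurable]: "X \<in> borel_measurable M" and a: "0 \<le> a" and c: "\<And>k. 0 \<le> c k"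
  shows "(\<integral>\<^sup>+ x. ennreal (a + (\<Sum>k<N. c k * max 0 (X x - s k))) \<partial>M)
      = ennreal a + (\<Sum>k<N. ennreal (c k) * (\<integral>\<^sup>+ x. ennreal (max 0 (X x - s k)) \<partial>M))"
proof -
  interpret prob_space M by fact
  have "\<And>x. ennreal (a + (\<Sum>k<N. c k * max 0 (X x - s k)))
     = ennreal a + (\<Sum>k<N. ennreal (c k) * ennreal (max 0 (X x - s k)))"
  proof -
    fix x
    have "ennreal (a + (\<Sum>k<N. c k * max 0 (X x - s k))) = ennreal a + ennreal (\<Sum>k<N. c k * max 0 (X x - s k))"
      using a c by (intro ennreal_plus) (auto intro!: sum_nonneg)
    also have "ennreal (\<Sum>k<N. c k * max 0 (X x - s k)) = (\<Sum>k<N. ennreal (c k * max 0 (X x - s k)))"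
      by (rule sum_ennreal[symmetric]) (use c in auto)
    also have "\<dots> = (\<Sum>k<N. ennreal (c k) * ennreal (max 0 (X x - s k)))"
      by (intro sum.cong refl ennreal_mult) (use c in auto)
    finally show "ennreal (a + (\<Sum>k<N. c k * max 0 (X x - s k)))
     = ennreal a + (\<Sum>k<N. ennreal (c k) * ennreal (max 0 (X x - s k)))" .
  qed
  then have "(\<integral>\<^sup>+ x. ennreal (a + (\<Sum>k<N. c k * max 0 (X x - s k))) \<partial>M)
     = (\<integral>\<^sup>+ x. ennreal a + (\<Sum>k<N. ennreal (c k) * ennreal (max 0 (X x - s k))) \<partial>M)" by simp
  also have "\<dots> = (\<integral>\<^sup>+ x. ennreal a \<partial>M) + (\<integral>\<^sup>+ x. (\<Sum>k<N. ennreal (c k) * ennreal (max 0 (X x - s k))) \<partial>M)"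
    by (rule nn_integral_add) auto
  also have "(\<integral>\<^sup>+ x. (\<Sum>k<N. ennreal (c k) * ennreal (max 0 (X x - s k))) \<partial>M)
     = (\<Sum>k<N. (\<integral>\<^sup>+ x. ennreal (c k) * ennreal (max 0 (X x - s k)) \<partial>M))"
    by (rule nn_integral_sum) auto
  also have "\<dots> = (\<Sum>k<N. ennreal (c k) * (\<integral>\<^sup>+ x. ennreal (max 0 (X x - s k)) \<partial>M))"
    by (intro sum.cong refl nn_integral_cmult) auto
  finally show ?thesis by (simp add: emeasure_space_1)
qed

lemma rep:
  assumes P1: "pos_rv M1 X1" and P2: "pos_rv M2 X2"
    and B: "\<And>t. 0 < t \<Longrightarrow> (\<integral>\<^sup>+ x. ennreal (max 0 (X1 x - t)) \<partial>M1) \<le> (\<integral>\<^sup>+ y. ennreal (max 0 (X2 y - t)) \<partial>M2)"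
  shows "icx_le M1 X1 M2 X2"
  unfolding icx_le_def
proof (intro allI impI, elim conjE)
  fix \<phi> :: "real \<Rightarrow> real"
  assume mono: "mono_on {0..} \<phi>" and cvx: "convex_on {0..} \<phi>" and nn: "\<forall>x\<ge>0. 0 \<le> \<phi> x"
  have X1m[measurable]: "X1 \<in> borel_measurable M1" and X2m[measurable]: "X2 \<in> borel_measurable M2"
    using P1 P2 by (auto simp: pos_rv_def)
  have pr1: "prob_space M1" and pr2: "prob_space M2" using P1 P2 by (auto simp: pos_rv_def)
  have X1p: "\<And>x. x \<in> space M1 \<Longrightarrow> 0 \<le> X1 x" and X2p: "\<And>x. x \<in> space M2 \<Longrightarrow> 0 \<le> X2 x"
    using P1 P2 by (auto simp: pos_rv_def)
  define hn where "hn n = inverse (real (Suc n))" for n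
  define Nn where "Nn n = Suc n * Suc n" for n
  define ps where "ps n = psi \<phi> (hn n) (Nn n)" for n
  have hpos: "0 < hn n" for n by (simp add: hn_def)
  have N1: "1 \<le> Nn n" for n by (simp add: Nn_def)
  have ps_le: "ps n x \<le> \<phi> x" if "0 \<le> x" for n x
    unfolding ps_def by (rule psi_le[OF mono cvx hpos N1 that])
  have ps_ge: "\<phi> 0 \<le> ps n x" for n x
    unfolding ps_def by (rule psi_ge[OF mono cvx hpos N1])
  have ps_unf: "ps n x = \<phi> 0 + (\<Sum>k<Nn n. cc \<phi> (hn n) k * max 0 (x - real (Suc k) * hn n))" for n x
    unfolding ps_def psi_def[OF mono cvx hpos N1] ..
  have cnn: "0 \<le> cc \<phi> (hn n) k" for n k by (rule cc_nonneg[OF mono cvx hpos N1])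
  have phi0: "0 \<le> \<phi> 0" using nn by simp
  have cmp: "(\<integral>\<^sup>+ x. ennreal (ps n (X1 x)) \<partial>M1) \<le> (\<integral>\<^sup>+ y. ennreal (ps n (X2 y)) \<partial>M2)" for n
  proof -
    have "(\<integral>\<^sup>+ x. ennreal (ps n (X1 x)) \<partial>M1) = ennreal (\<phi> 0) + (\<Sum>k<Nn n. ennreal (cc \<phi> (hn n) k) *
            (\<integral>\<^sup>+ x. ennreal (max 0 (X1 x - real (Suc k) * hn n)) \<partial>M1))"
      unfolding ps_unf by (rule lin_int[OF pr1 X1m phi0 cnn])
    also have "\<dots> \<le> ennreal (\<phi> 0) + (\<Sum>k<Nn n. ennreal (cc \<phi> (hn n) k) *
            (\<integral>\<^sup>+ x. ennreal (max 0 (X2 x - real (Suc k) * hn n)) \<partial>M2))"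
      using hpos by (intro add_left_mono sum_mono mult_left_mono B) auto
    also have "\<dots> = (\<integral>\<^sup>+ x. ennreal (ps n (X2 x)) \<partial>M2)"
      unfolding ps_unf by (rule lin_int[OF pr2 X2m phi0 cnn, symmetric])
    finally show ?thesis .
  qed
  have conv: "(\<lambda>n. ps n x) \<longlonglongrightarrow> \<phi> x" if x: "0 \<le> x" for x
  proof (cases "x = 0")
    case True
    have "ps n x = \<phi> x" for n using ps_le[of x n] ps_ge[of n x] True by simp
    then show ?thesis by simp
  next
    case False
    then have xp: "0 < x" using x by simp
    have hn0: "hn \<longlonglongrightarrow> 0" unfolding hn_def by (rule LIMSEQ_inverse_real_of_nat)
    have cont: "isCont \<phi> x"
    proof -
      have "convex_on {0<..} \<phi>" by (rule convex_on_subset[OF cvx]) auto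
      then have "continuous_on {0<..} \<phi>" by (intro convex_on_continuous) auto
      then show ?thesis using xp continuous_on_eq_continuous_at[of "{0<..}" \<phi>] by auto
    qed
    have lo: "(\<lambda>n. \<phi> (x - 2 * hn n)) \<longlonglongrightarrow> \<phi> x"
      using isCont_tendsto_compose[OF cont, of "\<lambda>n. x - 2 * hn n"]
      using tendsto_diff[OF tendsto_const[of x] tendsto_mult[OF tendsto_const[of 2] hn0]] by simp
    have ev1: "eventually (\<lambda>n. hn n < x / 2) sequentially"
      using order_tendstoD(2)[OF hn0, of "x/2"] xp by simp
    have ev2: "eventually (\<lambda>n. x \<le> real (Suc n)) sequentially"
    proof -
      obtain n0 :: nat where "x \<le> real n0" using real_arch_simple by blast
      then show ?thesis unfolding eventually_sequentially
        by (intro exI[of _ n0]) auto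
    qed
    have ev: "eventually (\<lambda>n. \<phi> (x - 2 * hn n) \<le> ps n x) sequentially"
      using ev1 ev2
    proof eventually_elim
      case (elim n)
      have "real (Nn n) * hn n = real (Suc n)" unfolding Nn_def hn_def of_nat_mult
        by (simp del: of_nat_Suc)
      then show ?case unfolding ps_def
        using elim by (intro psi_lower[OF mono cvx hpos N1]) auto
    qed
    show ?thesis
      by (rule tendsto_sandwich[OF ev _ lo tendsto_const]) (use ps_le x in auto)
  qed
  have [measurable]: "(\<lambda>x. ps n x) \<in> borel_measurable borel" for n
    unfolding ps_unf by measurable
  have "(\<integral>\<^sup>+ x. ennreal (\<phi> (X1 x)) \<partial>M1) = (\<integral>\<^sup>+ x. liminf (\<lambda>n. ennreal (ps n (X1 x))) \<partial>M1)"
  proof (rule nn_integral_cong)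
    fix x assume "x \<in> space M1"
    then have "(\<lambda>n. ennreal (ps n (X1 x))) \<longlonglongrightarrow> ennreal (\<phi> (X1 x))"
      using conv X1p by auto
    then show "ennreal (\<phi> (X1 x)) = liminf (\<lambda>n. ennreal (ps n (X1 x)))"
      by (simp add: lim_imp_Liminf)
  qed
  also have "\<dots> \<le> liminf (\<lambda>n. (\<integral>\<^sup>+ x. ennreal (ps n (X1 x)) \<partial>M1))"
    by (rule nn_integral_liminf) measurable
  also have "\<dots> \<le> liminf (\<lambda>n. (\<integral>\<^sup>+ x. ennreal (ps n (X2 x)) \<partial>M2))"
    by (rule Liminf_mono) (use cmp in auto)
  also have "\<dots> \<le> limsup (\<lambda>n. (\<integral>\<^sup>+ x. ennreal (ps n (X2 x)) \<partial>M2))"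
    by (rule Liminf_le_Limsup) simp
  also have "\<dots> \<le> (\<integral>\<^sup>+ x. ennreal (\<phi> (X2 x)) \<partial>M2)"
    by (rule Limsup_bounded) (auto intro!: always_eventually nn_integral_mono ennreal_leI ps_le X2p)
  finally show "(\<integral>\<^sup>+ x. ennreal (\<phi> (X1 x)) \<partial>M1) \<le> (\<integral>\<^sup>+ x. ennreal (\<phi> (X2 x)) \<partial>M2)" .
qed



definition "AA M X t = (\<integral>\<^sup>+ x. ennreal (X x * indicator {t<..} (X x)) \<partial>M)"
definition "BB M X t = (\<integral>\<^sup>+ x. ennreal (max 0 (X x - t)) \<partial>M)"

lemma BB_le_AA: assumes "pos_rv M X" "0 \<le> t" shows "BB M X t \<le> AA M X t"
  unfolding BB_def AA_def
proof (rule nn_integral_mono)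
  fix x assume "x \<in> space M"
  then have "0 \<le> X x" using assms by (auto simp: pos_rv_def)
  then show "ennreal (max 0 (X x - t)) \<le> ennreal (X x * indicator {t<..} (X x))"
    using assms by (intro ennreal_leI) (auto simp: indicator_def)
qed

lemma AA_le_BB: assumes "pos_rv M X" "0 \<le> t" shows "AA M X (2 * t) \<le> 2 * BB M X t"
proof -
  have [measurable]: "X \<in> borel_measurable M" using assms by (auto simp: pos_rv_def)
  have "AA M X (2 * t) \<le> (\<integral>\<^sup>+ x. 2 * ennreal (max 0 (X x - t)) \<partial>M)"
    unfolding AA_def
  proof (rule nn_integral_mono)
    fix x assume "x \<in> space M"
    then have "0 \<le> X x" using assms by (auto simp: pos_rv_def)
    then have "ennreal (X x * indicator {2*t<..} (X x)) \<le> ennreal (2 * max 0 (X x - t))"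
      using assms by (intro ennreal_leI) (auto simp: indicator_def)
    then show "ennreal (X x * indicator {2*t<..} (X x)) \<le> 2 * ennreal (max 0 (X x - t))"
      by (simp add: ennreal_mult)
  qed
  also have "\<dots> = 2 * BB M X t" unfolding BB_def by (rule nn_integral_cmult) auto
  finally show ?thesis .
qed

lemma BB_anti: assumes "s \<le> t" shows "BB M X t \<le> BB M X s"
  unfolding BB_def using assms by (intro nn_integral_mono ennreal_leI) auto

lemma BB0_le: assumes "pos_rv M X" "0 \<le> T" shows "BB M X 0 \<le> ennreal T + BB M X T"
proof -
  interpret prob_space M using assms by (simp add: pos_rv_def)
  have [measurable]: "X \<in> borel_measurable M" using assms by (auto simp: pos_rv_def)
  have "BB M X 0 \<le> (\<integral>\<^sup>+ x. ennreal T + ennreal (max 0 (X x - T)) \<partial>M)"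
    unfolding BB_def
  proof (rule nn_integral_mono)
    fix x assume "x \<in> space M"
    have "ennreal (max 0 (X x - 0)) \<le> ennreal (T + max 0 (X x - T))"
      using assms by (intro ennreal_leI) auto
    then show "ennreal (max 0 (X x - 0)) \<le> ennreal T + ennreal (max 0 (X x - T))"
      using assms by (simp add: ennreal_plus)
  qed
  also have "\<dots> = ennreal T + BB M X T" unfolding BB_def
    by (subst nn_integral_add) (auto simp: emeasure_space_1)
  finally show ?thesis .
qed

lemma CC_eq_BB: assumes "pos_rv M X" "0 \<le> t"
  shows "(\<integral>\<^sup>+ u. ennreal (indicator {t..} u * (1 - distr_fun M X u)) \<partial>lborel) = BB M X t"
  unfolding BB_def by (rule layer_cake_tail[OF assms])

lemma half_at_top: "filterlim (\<lambda>t::real. t / 2) at_top at_top"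
  unfolding filterlim_at_top
proof
  fix Z :: real
  show "eventually (\<lambda>t. Z \<le> t / 2) at_top"
    using eventually_ge_at_top[of "2 * Z"] by eventually_elim simp
qed

lemma anti_tendsto0:
  fixes f :: "real \<Rightarrow> ennreal"
  assumes anti: "\<And>s t. 0 \<le> s \<Longrightarrow> s \<le> t \<Longrightarrow> f t \<le> f s" and lim: "(\<lambda>n. f (real n)) \<longlonglongrightarrow> 0"
  shows "(f \<longlongrightarrow> 0) at_top"
proof -
  have fl: "filterlim (\<lambda>t::real. nat \<lfloor>t\<rfloor>) sequentially at_top"
    by (rule filterlim_compose[OF filterlim_nat_sequentially filterlim_floor_sequentially])
  have l2: "((\<lambda>t::real. f (real (nat \<lfloor>t\<rfloor>))) \<longlongrightarrow> 0) at_top"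
    using filterlim_compose[OF lim fl] by assumption
  have ev: "eventually (\<lambda>t::real. f t \<le> f (real (nat \<lfloor>t\<rfloor>))) at_top"
    using eventually_ge_at_top[of "0::real"]
  proof eventually_elim
    case (elim t)
    then show ?case by (intro anti) auto
  qed
  show ?thesis
    by (rule tendsto_sandwich[OF _ ev tendsto_const l2]) simp
qed



lemma cvx_pp: "convex_on {0..} (\<lambda>x::real. max 0 (x - t))"
proof (rule convex_onI)
  fix u x y :: real assume u: "0 < u" "u < 1"
  have a: "(1 - u) * (x - t) \<le> (1 - u) * max 0 (x - t)" using u by (intro mult_left_mono) auto
  have b: "u * (y - t) \<le> u * max 0 (y - t)" using u by (intro mult_left_mono) auto
  have c: "0 \<le> (1 - u) * max 0 (x - t)" "0 \<le> u * max 0 (y - t)" using u by auto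
  have "(1 - u) *\<^sub>R x + u *\<^sub>R y - t = (1 - u) * (x - t) + u * (y - t)" by (simp add: algebra_simps)
  then show "max 0 ((1 - u) *\<^sub>R x + u *\<^sub>R y - t) \<le> (1 - u) * max 0 (x - t) + u * max 0 (y - t)"
    using a b c by linarith
qed auto

lemma icx_BB: assumes "icx_le M1 X1 M2 X2" "0 \<le> t" shows "BB M1 X1 t \<le> BB M2 X2 t"
proof -
  have m: "mono_on {0..} (\<lambda>x::real. max 0 (x - t))" by (rule mono_onI) auto
  show ?thesis using assms(1) m cvx_pp[of t] unfolding icx_le_def BB_def by auto
qed

lemma integrable_BB_tendsto:
  assumes P: "pos_rv N Y" and int: "integrable N Y"
  shows "((\<lambda>t. BB N Y t) \<longlongrightarrow> 0) at_top"
proof (rule anti_tendsto0)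
  show "BB N Y t \<le> BB N Y s" if "0 \<le> s" "s \<le> t" for s t using BB_anti that by blast
  have [measurable]: "Y \<in> borel_measurable N" using P by (auto simp: pos_rv_def)
  have Yp: "\<And>y. y \<in> space N \<Longrightarrow> 0 \<le> Y y" using P by (auto simp: pos_rv_def)
  have "(\<lambda>i. (\<integral>\<^sup>+y. ennreal (max 0 (Y y - real i)) \<partial>N)) \<longlonglongrightarrow> (\<integral>\<^sup>+y. 0 \<partial>N)"
  proof (rule nn_integral_dominated_convergence[where w="\<lambda>y. ennreal (Y y)"])
    show "(\<integral>\<^sup>+ y. ennreal (Y y) \<partial>N) < \<infinity>" using integrableD(2)[OF int] by (simp add: top.not_eq_extremum)
    show "AE y in N. ennreal (max 0 (Y y - real j)) \<le> ennreal (Y y)" for j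
      using Yp by (intro AE_I2 ennreal_leI) auto
    show "AE y in N. (\<lambda>i. ennreal (max 0 (Y y - real i))) \<longlonglongrightarrow> 0"
    proof (intro AE_I2 tendsto_eventually)
      fix y
      obtain n0 :: nat where "Y y \<le> real n0" using real_arch_simple by blast
      then show "eventually (\<lambda>i. ennreal (max 0 (Y y - real i)) = 0) sequentially"
        unfolding eventually_sequentially by (intro exI[of _ n0]) auto
    qed
  qed auto
  then show "(\<lambda>n. BB N Y (real n)) \<longlonglongrightarrow> 0" by (simp add: BB_def)
qed



lemma construct:
  fixes G :: "real \<Rightarrow> ennreal"
  assumes lim: "(G \<longlongrightarrow> 0) at_top" and bnd: "\<And>t. 0 \<le> t \<Longrightarrow> G t \<le> ennreal m" and m: "0 < m"
  shows "\<exists>(N::real measure) Y. pos_rv N Y \<and> integrable N Y \<and> (\<forall>t\<ge>0. G t \<le> BB N Y t)"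
proof -
  define e where "e k = m * (1/2) ^ k" for k :: nat
  have epos: "0 < e k" for k using m by (simp add: e_def)
  have "\<forall>k. \<exists>T. \<forall>t\<ge>T. G t \<le> ennreal (e k)"
  proof
    fix k
    have "eventually (\<lambda>t. G t < ennreal (e k)) at_top"
      using order_tendstoD(2)[OF lim, of "ennreal (e k)"] epos by simp
    then obtain T where "\<forall>t\<ge>T. G t < ennreal (e k)" unfolding eventually_at_top_linorder by blast
    then show "\<exists>T. \<forall>t\<ge>T. G t \<le> ennreal (e k)" by (auto intro: less_imp_le)
  qed
  then obtain T' where T': "\<And>k t. T' k \<le> t \<Longrightarrow> G t \<le> ennreal (e k)" by metis
  define U where "U k = max (real k + 2 * m) (T' (Suc k))" for k
  define q where "q k = e k / U k" for k
  have U2m: "2 * m \<le> U k" and Uk: "real k \<le> U k" and UT: "T' (Suc k) \<le> U k" for k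
    using m by (auto simp: U_def)
  have Upos: "0 < U k" for k using U2m[of k] m by linarith
  have qnn: "0 \<le> q k" for k using epos[of k] Upos[of k] by (simp add: q_def)
  have qle: "q k \<le> (1/2) ^ Suc k" for k
  proof -
    have "q k \<le> e k / (2 * m)" unfolding q_def using epos[of k] U2m[of k] m
      by (intro divide_left_mono) auto
    also have "\<dots> = (1/2) ^ Suc k" using m by (simp add: e_def)
    finally show ?thesis .
  qed
  have sg: "summable (\<lambda>k. (1/2::real) ^ Suc k)" by simp
  have sq: "summable q" by (rule summable_comparison_test[OF _ sg]) (use qnn qle in auto)
  have "(\<Sum>k. (1/2::real) ^ Suc k) = 1"
  proof -
    have "summable (\<lambda>k. (1/2::real) ^ k)" by (rule summable_geometric) simp
    then have "(\<Sum>k. (1/2::real) ^ k / 2) = (\<Sum>k. (1/2::real) ^ k) / 2" by (rule suminf_divide)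
    then show ?thesis using suminf_geometric[of "1/2::real"] by simp
  qed
  then have S1: "suminf q \<le> 1" using suminf_le[OF qle sq sg] by simp
  define w where "w k = (case k of 0 \<Rightarrow> 1 - suminf q | Suc j \<Rightarrow> q j)" for k
  define v where "v k = (case k of 0 \<Rightarrow> 0 | Suc j \<Rightarrow> 2 * U j)" for k
  have wnn: "0 \<le> w k" for k using S1 qnn by (cases k) (auto simp: w_def)
  have sw: "summable w" using sq by (subst summable_Suc_iff[symmetric]) (simp add: w_def)
  have sumw: "suminf w = 1"
    using suminf_split_head[OF sw] by (simp add: w_def)
  have wprob: "(\<integral>\<^sup>+k. ennreal (w k) \<partial>count_space UNIV) = 1"
    using sumw wnn sw by (simp add: nn_integral_count_space_nat suminf_ennreal2)
  define p where "p = embed_pmf w"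
  have pmf_p: "pmf p k = w k" for k unfolding p_def by (rule pmf_embed_pmf[OF wnn wprob])
  define N where "N = measure_pmf (map_pmf v p)"
  define Y where "Y = (\<lambda>y::real. max 0 y)"
  have vnn: "0 \<le> v k" for k using Upos by (cases k) (auto simp: v_def less_imp_le)
  have pos: "pos_rv N Y"
    unfolding pos_rv_def N_def Y_def by (auto simp: measure_pmf.prob_space_axioms)
  have eqv: "(\<integral>\<^sup>+ y. ennreal (Y y) \<partial>N) = (\<integral>\<^sup>+ k. ennreal (v k) \<partial>measure_pmf p)"
      unfolding N_def Y_def using vnn by simp
  have intg: "(\<integral>\<^sup>+ y. ennreal (Y y) \<partial>N) = (\<Sum>k. ennreal (w k) * ennreal (v k))"
  proof -
    note eqv
    also have "\<dots> = (\<Sum>k. ennreal (w k) * ennreal (v k))"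
      by (simp add: nn_integral_measure_pmf nn_integral_count_space_nat pmf_p)
    finally show ?thesis .
  qed
  have trm: "w k * v k \<le> 4 * m * (1/2) ^ k" for k
  proof (cases k)
    case 0 then show ?thesis using m by (simp add: w_def v_def)
  next
    case (Suc j)
    have "w k * v k = 2 * e j" using Upos[of j] by (simp add: Suc w_def v_def q_def)
    then show ?thesis using Suc by (simp add: e_def)
  qed
  have sg2: "summable (\<lambda>k. 4 * m * (1/2::real) ^ k)" by simp
  have "(\<Sum>k. ennreal (w k) * ennreal (v k)) \<le> (\<Sum>k. ennreal (4 * m * (1/2) ^ k))"
    by (intro suminf_le) (auto simp: ennreal_mult[symmetric] wnn vnn trm intro!: ennreal_leI)
  also have "\<dots> = ennreal (\<Sum>k. 4 * m * (1/2) ^ k)" using m by (intro suminf_ennreal2 sg2) auto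
  finally have fin: "(\<integral>\<^sup>+ y. ennreal (Y y) \<partial>N) < \<infinity>" using intg
    by (simp add: le_less_trans)
  have intY: "integrable N Y"
  proof -
    have fin': "(\<integral>\<^sup>+ x. ennreal (v x) \<partial>measure_pmf p) < \<infinity>" using fin eqv by simp
    show ?thesis
      apply (rule integrableI_nonneg)
        apply (simp add: N_def Y_def)
       apply (simp add: N_def Y_def)
      using eqv fin by (simp add: N_def Y_def)
  qed
  have dom: "G t \<le> BB N Y t" if t: "0 \<le> t" for t
  proof -
    have ex: "\<exists>k. t \<le> U k"
    proof -
      obtain n :: nat where "t \<le> real n" using real_arch_simple by blast
      then show ?thesis using Uk[of n] by (intro exI[of _ n]) auto
    qed
    define k where "k = (LEAST k. t \<le> U k)"
    have tk: "t \<le> U k" unfolding k_def by (rule LeastI_ex[OF ex])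
    have Gk: "G t \<le> ennreal (e k)"
    proof (cases k)
      case 0
      then show ?thesis using bnd[OF t] by (simp add: e_def)
    next
      case (Suc j)
      then have "\<not> t \<le> U j" unfolding k_def using not_less_Least[of j "\<lambda>k. t \<le> U k"]
        by (metis lessI)
      then have "T' (Suc j) \<le> t" using UT[of j] by linarith
      then show ?thesis using T' Suc by blast
    qed
    have "e k = q k * U k" using Upos[of k] by (simp add: q_def)
    also have "\<dots> \<le> w (Suc k) * max 0 (max 0 (v (Suc k)) - t)"
      using qnn[of k] tk Upos[of k] by (auto simp: w_def v_def intro!: mult_left_mono)
    finally have ek0: "e k \<le> w (Suc k) * max 0 (max 0 (v (Suc k)) - t)" .
    have em: "ennreal (w (Suc k) * max 0 (max 0 (v (Suc k)) - t)) = ennreal (w (Suc k)) * ennreal (max 0 (max 0 (v (Suc k)) - t))"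
      by (rule ennreal_mult) (auto simp: wnn)
    have ek: "ennreal (e k) \<le> ennreal (w (Suc k)) * ennreal (max 0 (max 0 (v (Suc k)) - t))"
      using ennreal_leI[OF ek0] em by metis
    have "ennreal (w (Suc k)) * ennreal (max 0 (max 0 (v (Suc k)) - t))
        = (\<integral>\<^sup>+ j. ennreal (max 0 (max 0 (v (Suc k)) - t)) * indicator {Suc k} j \<partial>measure_pmf p)"
      by (subst nn_integral_cmult_indicator) (auto simp: emeasure_pmf_single pmf_p mult.commute)
    also have "\<dots> \<le> (\<integral>\<^sup>+ j. ennreal (max 0 (max 0 (v j) - t)) \<partial>measure_pmf p)"
      by (intro nn_integral_mono) (auto simp: indicator_def)
    also have "\<dots> = BB N Y t" by (simp add: BB_def N_def Y_def)
    finally show ?thesis using Gk ek by (meson order.trans)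
  qed
  show ?thesis using pos intY dom by blast
qed



theorem mainTheorem1:
  fixes I :: "'i set" and M :: "'i \<Rightarrow> 'a measure" and X :: "'i \<Rightarrow> 'a \<Rightarrow> real"
  assumes pos: "\<And>\<alpha>. \<alpha> \<in> I \<Longrightarrow> pos_rv (M \<alpha>) (X \<alpha>)"
  shows "((\<exists>(N :: real measure) Y. pos_rv N Y \<and> integrable N Y \<and>
              (\<forall>\<alpha>\<in>I. icx_le (M \<alpha>) (X \<alpha>) N Y))
          \<longleftrightarrow>
          ((\<lambda>t. \<Squnion>\<alpha>\<in>I. \<integral>\<^sup>+ x. ennreal (X \<alpha> x * indicator {t<..} (X \<alpha> x)) \<partial>M \<alpha>)
              \<longlongrightarrow> 0) at_top)
       \<and>
         (((\<lambda>t. \<Squnion>\<alpha>\<in>I. \<integral>\<^sup>+ x. ennreal (X \<alpha> x * indicator {t<..} (X \<alpha> x)) \<partial>M \<alpha>)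
              \<longlongrightarrow> 0) at_top
          \<longleftrightarrow>
          ((\<lambda>t. \<Squnion>\<alpha>\<in>I. \<integral>\<^sup>+ u. ennreal (indicator {t..} u * (1 - distr_fun (M \<alpha>) (X \<alpha>) u)) \<partial>lborel)
              \<longlongrightarrow> 0) at_top)"
proof -
  define SB where "SB t = (\<Squnion>\<alpha>\<in>I. BB (M \<alpha>) (X \<alpha>) t)" for t
  define SA where "SA t = (\<Squnion>\<alpha>\<in>I. AA (M \<alpha>) (X \<alpha>) t)" for t
  have SAeq: "(\<lambda>t. \<Squnion>\<alpha>\<in>I. \<integral>\<^sup>+ x. ennreal (X \<alpha> x * indicator {t<..} (X \<alpha> x)) \<partial>M \<alpha>) = SA"
    by (intro ext) (simp only: SA_def AA_def)
  have SCeq: "((\<lambda>t. \<Squnion>\<alpha>\<in>I. \<integral>\<^sup>+ u. ennreal (indicator {t..} u * (1 - distr_fun (M \<alpha>) (X \<alpha>) u)) \<partial>lborel)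
              \<longlongrightarrow> 0) at_top \<longleftrightarrow> (SB \<longlongrightarrow> 0) at_top"
  proof (rule tendsto_cong)
    show "eventually (\<lambda>t. (\<Squnion>\<alpha>\<in>I. \<integral>\<^sup>+ u. ennreal (indicator {t..} u * (1 - distr_fun (M \<alpha>) (X \<alpha>) u)) \<partial>lborel) = SB t) at_top"
      using eventually_ge_at_top[of "0::real"]
    proof eventually_elim
      case (elim t)
      then show ?case unfolding SB_def using CC_eq_BB[OF pos] by (intro SUP_cong) auto
    qed
  qed
  have AB: "(SA \<longlongrightarrow> 0) at_top \<longleftrightarrow> (SB \<longlongrightarrow> 0) at_top"
  proof
    assume A: "(SA \<longlongrightarrow> 0) at_top"
    have "eventually (\<lambda>t. SB t \<le> SA t) at_top"
      using eventually_ge_at_top[of "0::real"]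
    proof eventually_elim
      case (elim t)
      then show ?case unfolding SB_def SA_def using BB_le_AA[OF pos]
        by (intro SUP_mono) blast
    qed
    then show "(SB \<longlongrightarrow> 0) at_top"
      by (intro tendsto_sandwich[OF _ _ tendsto_const A]) auto
  next
    assume B: "(SB \<longlongrightarrow> 0) at_top"
    have B2: "((\<lambda>t. 2 * SB (t / 2)) \<longlongrightarrow> 0) at_top"
      using ennreal_tendsto_cmult[of 2, OF _ filterlim_compose[OF B half_at_top]] by simp
    have "eventually (\<lambda>t. SA t \<le> 2 * SB (t / 2)) at_top"
      using eventually_ge_at_top[of "0::real"]
    proof eventually_elim
      case (elim t)
      show ?case unfolding SA_def
      proof (rule SUP_least)
        fix \<alpha> assume a: "\<alpha> \<in> I"
        have "AA (M \<alpha>) (X \<alpha>) (2 * (t/2)) \<le> 2 * BB (M \<alpha>) (X \<alpha>) (t / 2)"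
          using elim by (intro AA_le_BB pos a) auto
        also have "\<dots> \<le> 2 * SB (t / 2)" unfolding SB_def
          by (intro mult_left_mono SUP_upper a) auto
        finally show "AA (M \<alpha>) (X \<alpha>) t \<le> 2 * SB (t / 2)" by simp
      qed
    qed
    then show "(SA \<longlongrightarrow> 0) at_top"
      by (intro tendsto_sandwich[OF _ _ tendsto_const B2]) auto
  qed
  have iB: "(SB \<longlongrightarrow> 0) at_top" if "\<exists>(N :: real measure) Y. pos_rv N Y \<and> integrable N Y \<and>
              (\<forall>\<alpha>\<in>I. icx_le (M \<alpha>) (X \<alpha>) N Y)"
  proof -
    from that obtain N :: "real measure" and Y where P: "pos_rv N Y" and int: "integrable N Y"
      and icx: "\<forall>\<alpha>\<in>I. icx_le (M \<alpha>) (X \<alpha>) N Y" by blast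
    have "eventually (\<lambda>t. SB t \<le> BB N Y t) at_top"
      using eventually_ge_at_top[of "0::real"]
    proof eventually_elim
      case (elim t)
      show ?case unfolding SB_def using icx elim by (intro SUP_least icx_BB) auto
    qed
    then show ?thesis
      by (intro tendsto_sandwich[OF _ _ tendsto_const integrable_BB_tendsto[OF P int]]) auto
  qed
  have Bi: "\<exists>(N :: real measure) Y. pos_rv N Y \<and> integrable N Y \<and>
              (\<forall>\<alpha>\<in>I. icx_le (M \<alpha>) (X \<alpha>) N Y)" if B: "(SB \<longlongrightarrow> 0) at_top"
  proof -
    have "eventually (\<lambda>t. SB t < 1) at_top"
      using order_tendstoD(2)[OF B, of 1] by simp
    then obtain T0 where T0: "\<And>t. T0 \<le> t \<Longrightarrow> SB t < 1" unfolding eventually_at_top_linorder by blast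
    define T where "T = max 0 T0"
    have T: "0 \<le> T" "SB T < 1" using T0[of T] by (auto simp: T_def)
    have bnd: "SB t \<le> ennreal (T + 1)" if t: "0 \<le> t" for t
      unfolding SB_def
    proof (rule SUP_least)
      fix \<alpha> assume a: "\<alpha> \<in> I"
      have "BB (M \<alpha>) (X \<alpha>) t \<le> BB (M \<alpha>) (X \<alpha>) 0" using t by (rule BB_anti)
      also have "\<dots> \<le> ennreal T + BB (M \<alpha>) (X \<alpha>) T" by (rule BB0_le[OF pos[OF a] T(1)])
      also have "BB (M \<alpha>) (X \<alpha>) T \<le> SB T" unfolding SB_def using a by (rule SUP_upper)
      also have "SB T \<le> 1" using T by simp
      finally show "BB (M \<alpha>) (X \<alpha>) t \<le> ennreal (T + 1)"
        using T(1) by (simp add: ennreal_plus add_left_mono)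
    qed
    obtain N :: "real measure" and Y where P: "pos_rv N Y" and int: "integrable N Y"
      and dom: "\<forall>t\<ge>0. SB t \<le> BB N Y t"
      using construct[OF B bnd] T(1) by auto
    have "icx_le (M \<alpha>) (X \<alpha>) N Y" if a: "\<alpha> \<in> I" for \<alpha>
    proof (rule rep[OF pos[OF a] P])
      fix t :: real assume t: "0 < t"
      have "BB (M \<alpha>) (X \<alpha>) t \<le> SB t" unfolding SB_def using a by (rule SUP_upper)
      also have "\<dots> \<le> BB N Y t" using dom t by auto
      finally show "(\<integral>\<^sup>+ x. ennreal (max 0 (X \<alpha> x - t)) \<partial>M \<alpha>) \<le> (\<integral>\<^sup>+ y. ennreal (max 0 (Y y - t)) \<partial>N)"
        by (simp add: BB_def)
    qed
    then show ?thesis using P int by blast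
  qed
  show ?thesis unfolding SAeq SCeq using AB iB Bi by blast
qed

end
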